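(* For $\lambda\ge1$ let $\mathcal{N}_1,\ldots,\mathcal{N}_\lambda$ be i.i.d. standard normal random variables and $\mathcal{N}_{1:\lambda}$ their minimum. Then $\mathbb{E}(\mathcal{N}_{1:1}^2)=\mathbb{E}(\mathcal{N}_{1:2}^2)=1$, and for all $\lambda\ge2$, $\mathbb{E}(\mathcal{N}_{1:\lambda+1}^2)>\mathbb{E}(\mathcal{N}_{1:\lambda}^2)$. *)

theory Defs
  imports "HOL-Probability.Probability"
begin

definition std_normal_measure :: "real measure" where
  "std_normal_measure = density lborel std_normal_density"

definition E_min_sq :: "nat \<Rightarrow> real" where
  "E_min_sq n =
     (\<integral>x. (Min (x ` {..<n}))\<^sup>2 \<partial>(PiM {..<n} (\<lambda>_. std_normal_measure)))"

end

theory Submission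
  imports Defs
begin

lemma N_prob: "prob_space std_normal_measure"
  unfolding std_normal_measure_def by (rule prob_space_normal_density) simp

lemma N_sets[simp, measurable_cong]: "sets std_normal_measure = sets borel"
  unfolding std_normal_measure_def by simp

lemma N_space[simp]: "space std_normal_measure = UNIV"
  unfolding std_normal_measure_def by simp

lemma N_emeasure: "A \<in> sets borel \<Longrightarrow> emeasure std_normal_measure A =
   (\<integral>\<^sup>+x. ennreal (std_normal_density x) * indicator A x \<partial>lborel)"
  unfolding std_normal_measure_def by (simp add: emeasure_density)

lemma N_sym: "emeasure std_normal_measure {..-t} = emeasure std_normal_measure {t..}"
proof -
  have "emeasure std_normal_measure {t..} =
   (\<integral>\<^sup>+x. ennreal (std_normal_density x) * indicator {t..} x \<partial>lborel)" by (simp add: N_emeasure)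
  also have "\<dots> = ennreal \<bar>-1\<bar> * (\<integral>\<^sup>+x. ennreal (std_normal_density (0 + (-1) * x)) * indicator {t..} (0 + (-1) * x) \<partial>lborel)"
    by (rule nn_integral_real_affine) auto
  also have "\<dots> = (\<integral>\<^sup>+x. ennreal (std_normal_density x) * indicator {..-t} x \<partial>lborel)"
    apply simp
    apply (rule nn_integral_cong)
    apply (auto simp: normal_density_def indicator_def)
    done
  also have "\<dots> = emeasure std_normal_measure {..-t}" by (simp add: N_emeasure)
  finally show ?thesis by simp
qed

lemma N_pos: assumes "a < b" shows "0 < emeasure std_normal_measure {a..b}"
proof -
  have "emeasure std_normal_measure {a..b} = (\<integral>\<^sup>+x. ennreal (std_normal_density x) * indicator {a..b} x \<partial>lborel)"
    by (simp add: N_emeasure)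
  also have "\<dots> \<noteq> 0"
  proof (subst nn_integral_0_iff)
    have "{x \<in> space lborel. ennreal (std_normal_density x) * indicator {a..b} x \<noteq> 0} = {a..b}"
      using normal_density_pos[of 1 0] by (auto simp: indicator_def) (metis less_irrefl)
    then show "emeasure lborel {x \<in> space lborel. ennreal (std_normal_density x) * indicator {a..b} x \<noteq> 0} \<noteq> 0"
      using assms by simp
  qed auto
  finally show ?thesis by (simp add: zero_less_iff_neq_zero)
qed


interpretation N: prob_space std_normal_measure by (rule N_prob)

definition qN :: "real \<Rightarrow> real" where "qN t = measure std_normal_measure {t..}"

lemma N_pos': "a < b \<Longrightarrow> 0 < measure std_normal_measure {a..b}"
  using N_pos[of a b] by (simp add: N.emeasure_eq_measure)

lemma qN_sym: "measure std_normal_measure {..-t} = qN t"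
  using N_sym[of t] unfolding qN_def by (simp add: N.emeasure_eq_measure)

lemma qN_compl: "measure std_normal_measure {-t<..} = 1 - qN t"
proof -
  have "{-t<..} = space std_normal_measure - {..-t}" by auto
  then show ?thesis using N.prob_compl[of "{..-t}"] qN_sym[of t] by simp
qed

lemma qN_pos: "0 < qN t"
proof -
  have "measure std_normal_measure {t..t+1} \<le> qN t"
    unfolding qN_def by (rule N.finite_measure_mono) auto
  with N_pos'[of t "t+1"] show ?thesis by simp
qed

lemma qN_half: assumes "0 < t" shows "qN t < 1/2"
proof -
  have "{-t<..} = {-t<..<t} \<union> {t..}" using assms by auto
  moreover have "measure std_normal_measure ({-t<..<t} \<union> {t..}) = measure std_normal_measure {-t<..<t} + qN t"
    unfolding qN_def by (rule N.finite_measure_Union) auto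
  ultimately have "measure std_normal_measure {-t<..} = measure std_normal_measure {-t<..<t} + qN t"
    by simp
  moreover have "measure std_normal_measure {-t/2..t/2} \<le> measure std_normal_measure {-t<..<t}"
    using assms by (intro N.finite_measure_mono) auto
  moreover have "0 < measure std_normal_measure {-t/2..t/2}" using assms by (intro N_pos') auto
  ultimately show ?thesis using qN_compl[of t] by linarith
qed


abbreviation PN :: "nat \<Rightarrow> (nat \<Rightarrow> real) measure" where
  "PN n \<equiv> PiM {..<n} (\<lambda>_. std_normal_measure)"

lemma PN_prob: "prob_space (PN n)"
  by (rule prob_space_PiM) (rule N_prob)

interpretation NP: product_sigma_finite "\<lambda>_::nat. std_normal_measure"
  unfolding product_sigma_finite_def by (simp add: N.sigma_finite_measure_axioms)

lemma PN_box: "measure (PN n) (PiE {..<n} (\<lambda>_. A)) = measure std_normal_measure A ^ n"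
  if "A \<in> sets borel"
proof -
  interpret P: prob_space "PN n" by (rule PN_prob)
  have "emeasure (PN n) (PiE {..<n} (\<lambda>_. A)) = (\<Prod>i\<in>{..<n}. emeasure std_normal_measure A)"
    using that by (subst NP.emeasure_PiM) auto
  also have "\<dots> = ennreal (measure std_normal_measure A ^ n)"
    by (simp add: N.emeasure_eq_measure prod_ennreal flip: ennreal_power)
  finally show ?thesis
    by (simp add: P.emeasure_eq_measure)
qed

lemma measurable_MinPN[measurable]: "(\<lambda>x. Min (x ` {..<n})) \<in> borel_measurable (PN n)"
  by measurable

definition G :: "nat \<Rightarrow> real \<Rightarrow> real" where
  "G n t = measure (PN n) {x\<in>space (PN n). t \<le> \<bar>Min (x ` {..<n})\<bar>}"

lemma G_formula:
  assumes "1 \<le> n" "0 < t"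
  shows "G n t = qN t ^ n + 1 - (1 - qN t) ^ n"
proof -
  interpret P: prob_space "PN n" by (rule PN_prob)
  have "0 \<in> {..<n}" using assms by auto
  then have ne: "{..<n} \<noteq> {}" by blast
  have sp: "space (PN n) = PiE {..<n} (\<lambda>_. UNIV)" by (simp add: space_PiM)
  let ?A = "{x\<in>space (PN n). t \<le> Min (x ` {..<n})}"
  let ?B = "{x\<in>space (PN n). Min (x ` {..<n}) \<le> -t}"
  have A: "?A = PiE {..<n} (\<lambda>_. {t..})"
    by (rule set_eqI) (simp add: sp PiE_iff Min_ge_iff ne conj_commute)
  have B: "?B = space (PN n) - PiE {..<n} (\<lambda>_. {-t<..})"
    by (rule set_eqI) (simp add: sp PiE_iff Min_le_iff ne not_less, blast)
  have "{x\<in>space (PN n). t \<le> \<bar>Min (x ` {..<n})\<bar>} = ?A \<union> ?B"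
    using assms by auto
  then have "G n t = measure (PN n) (?A \<union> ?B)" by (simp add: G_def)
  also have "\<dots> = measure (PN n) ?A + measure (PN n) ?B"
    using assms by (intro P.finite_measure_Union) auto
  also have "measure (PN n) ?A = qN t ^ n"
    unfolding A by (simp add: PN_box qN_def)
  also have "measure (PN n) ?B = 1 - (1 - qN t) ^ n"
    unfolding B by (subst P.prob_compl) (auto simp: PN_box qN_compl sets_PiM_I_finite)
  finally show ?thesis by simp
qed


lemma sq_layer: "ennreal (y\<^sup>2) = (\<integral>\<^sup>+t. ennreal (2 * t) * indicator {0..\<bar>y\<bar>} t \<partial>lborel)"
proof -
  have "(\<integral>\<^sup>+t. ennreal (2 * t) * indicator {0..\<bar>y\<bar>} t \<partial>lborel) = ennreal (\<bar>y\<bar>^2 - 0^2)"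
    by (rule nn_integral_FTC_Icc[where F="\<lambda>t. t^2"]) (auto intro!: derivative_eq_intros)
  then show ?thesis by simp
qed

lemma pair_PN: "pair_sigma_finite (PN n) lborel"
  unfolding pair_sigma_finite_def
  using prob_space_imp_sigma_finite[OF PN_prob] sigma_finite_lborel by simp

lemma meas_pair: "(\<lambda>(x, t). ennreal (2 * t) * indicator {0..\<bar>Min (x ` {..<n})\<bar>} t)
   \<in> borel_measurable (PN n \<Otimes>\<^sub>M lborel)"
proof -
  have "(\<lambda>(x, t). ennreal (2 * t) * indicator {0..\<bar>Min (x ` {..<n})\<bar>} t) =
        (\<lambda>p. ennreal (2 * snd p) * indicator {p. 0 \<le> snd p \<and> snd p \<le> \<bar>Min (fst p ` {..<n})\<bar>} p)"
    by (auto simp: fun_eq_iff indicator_def)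
  also have "\<dots> \<in> borel_measurable (PN n \<Otimes>\<^sub>M lborel)"
    by measurable
  finally show ?thesis .
qed

lemma nnE: "(\<integral>\<^sup>+x. ennreal ((Min (x ` {..<n}))\<^sup>2) \<partial>PN n) =
   (\<integral>\<^sup>+t. ennreal (2 * t * G n t) * indicator {0<..} t \<partial>lborel)"
proof -
  interpret P: prob_space "PN n" by (rule PN_prob)
  interpret PL: pair_sigma_finite "PN n" lborel by (rule pair_PN)
  have "(\<integral>\<^sup>+x. ennreal ((Min (x ` {..<n}))\<^sup>2) \<partial>PN n) =
    (\<integral>\<^sup>+x. (\<integral>\<^sup>+t. ennreal (2 * t) * indicator {0..\<bar>Min (x ` {..<n})\<bar>} t \<partial>lborel) \<partial>PN n)"
    by (simp add: sq_layer)
  also have "\<dots> = (\<integral>\<^sup>+t. (\<integral>\<^sup>+x. ennreal (2 * t) * indicator {0..\<bar>Min (x ` {..<n})\<bar>} t \<partial>PN n) \<partial>lborel)"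
    by (rule PL.Fubini'[symmetric]) (rule meas_pair)
  also have "\<dots> = (\<integral>\<^sup>+t. ennreal (2 * t * G n t) * indicator {0<..} t \<partial>lborel)"
  proof (rule nn_integral_cong)
    fix t :: real
    show "(\<integral>\<^sup>+x. ennreal (2 * t) * indicator {0..\<bar>Min (x ` {..<n})\<bar>} t \<partial>PN n) =
          ennreal (2 * t * G n t) * indicator {0<..} t"
    proof (cases "0 < t")
      case True
      let ?S = "{x\<in>space (PN n). t \<le> \<bar>Min (x ` {..<n})\<bar>}"
      have "(\<integral>\<^sup>+x. ennreal (2 * t) * indicator {0..\<bar>Min (x ` {..<n})\<bar>} t \<partial>PN n) =
            (\<integral>\<^sup>+x. ennreal (2 * t) * indicator ?S x \<partial>PN n)"
        using True by (intro nn_integral_cong) (auto simp: indicator_def)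
      also have "\<dots> = ennreal (2 * t) * emeasure (PN n) ?S"
        by (rule nn_integral_cmult_indicator) measurable
      also have "\<dots> = ennreal (2 * t * G n t) * indicator {0<..} t"
        using True by (simp add: G_def P.emeasure_eq_measure ennreal_mult)
      finally show ?thesis .
    next
      case False
      then show ?thesis
        by (cases "t = 0") (auto simp: indicator_def)
    qed
  qed
  finally show ?thesis .
qed

lemma E_layer: "E_min_sq n = enn2real (\<integral>\<^sup>+t. ennreal (2 * t * G n t) * indicator {0<..} t \<partial>lborel)"
  unfolding E_min_sq_def nnE[symmetric] by (rule integral_eq_nn_integral) auto


lemma N_sq: "(\<integral>\<^sup>+y. ennreal (y\<^sup>2) \<partial>std_normal_measure) = 1"
proof -
  have "(\<integral>\<^sup>+y. ennreal (y\<^sup>2) \<partial>std_normal_measure) =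
        (\<integral>\<^sup>+y. ennreal (std_normal_density y) * ennreal (y\<^sup>2) \<partial>lborel)"
    unfolding std_normal_measure_def by (rule nn_integral_density) auto
  also have "\<dots> = (\<integral>\<^sup>+y. ennreal (std_normal_density y * y ^ (2 * 1)) \<partial>lborel)"
    by (intro nn_integral_cong) (simp add: ennreal_mult' normal_density_nonneg)
  also have "\<dots> = ennreal (\<integral>y. std_normal_density y * y ^ (2 * 1) \<partial>lborel)"
    by (rule nn_integral_eq_integral) (auto intro!: integrable_std_normal_moment normal_density_nonneg)
  also have "\<dots> = 1"
    by (subst integral_std_normal_moment_even) simp
  finally show ?thesis .
qed

lemma comp_sq: assumes "i < n" shows "(\<integral>\<^sup>+x. ennreal ((x i)\<^sup>2) \<partial>PN n) = 1"
proof -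
  have "(\<integral>\<^sup>+x. ennreal ((x i)\<^sup>2) \<partial>PN n) =
        (\<integral>\<^sup>+y. ennreal (y\<^sup>2) \<partial>distr (PN n) std_normal_measure (\<lambda>x. x i))"
    using assms by (subst nn_integral_distr) auto
  also have "distr (PN n) std_normal_measure (\<lambda>x. x i) = std_normal_measure"
    using assms by (intro distr_PiM_component N_prob) auto
  finally show ?thesis using N_sq by simp
qed

lemma fin: assumes "1 \<le> n" shows "(\<integral>\<^sup>+x. ennreal ((Min (x ` {..<n}))\<^sup>2) \<partial>PN n) < \<infinity>"
proof -
  have "0 \<in> {..<n}" using assms by auto
  then have ne: "{..<n} \<noteq> {}" by blast
  have "(\<integral>\<^sup>+x. ennreal ((Min (x ` {..<n}))\<^sup>2) \<partial>PN n) \<le>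
        (\<integral>\<^sup>+x. (\<Sum>i\<in>{..<n}. ennreal ((x i)\<^sup>2)) \<partial>PN n)"
  proof (rule nn_integral_mono)
    fix x :: "nat \<Rightarrow> real"
    have "Min (x ` {..<n}) \<in> x ` {..<n}" using ne by (intro Min_in) auto
    then obtain j where j: "j < n" "Min (x ` {..<n}) = x j" by auto
    have "ennreal ((x j)\<^sup>2) \<le> (\<Sum>i\<in>{..<n}. ennreal ((x i)\<^sup>2))"
      using j by (intro member_le_sum) auto
    then show "ennreal ((Min (x ` {..<n}))\<^sup>2) \<le> (\<Sum>i\<in>{..<n}. ennreal ((x i)\<^sup>2))"
      using j by simp
  qed
  also have "\<dots> = (\<Sum>i\<in>{..<n}. (\<integral>\<^sup>+x. ennreal ((x i)\<^sup>2) \<partial>PN n))"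
    by (rule nn_integral_sum) auto
  also have "\<dots> = of_nat n" by (simp add: comp_sq)
  also have "\<dots> < \<infinity>" by (metis ennreal_of_nat_eq_real_of_nat ennreal_less_top infinity_ennreal_def)
  finally show ?thesis .
qed

lemma E1: "E_min_sq 1 = 1"
proof -
  have "E_min_sq 1 = enn2real (\<integral>\<^sup>+x. ennreal ((Min (x ` {..<1}))\<^sup>2) \<partial>PN 1)"
    unfolding E_min_sq_def by (rule integral_eq_nn_integral) auto
  also have "(\<integral>\<^sup>+x. ennreal ((Min (x ` {..<1}))\<^sup>2) \<partial>PN 1) = (\<integral>\<^sup>+x. ennreal ((x 0)\<^sup>2) \<partial>PN 1)"
    by (simp add: lessThan_Suc)
  also have "\<dots> = 1" by (rule comp_sq) simp
  finally show ?thesis by simp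
qed


lemma qN_meas[measurable]: "qN \<in> borel_measurable borel"
proof -
  have "(\<lambda>t. - qN t) \<in> borel_measurable borel"
    by (rule borel_measurable_mono) (auto simp: mono_def qN_def intro!: N.finite_measure_mono)
  then have "(\<lambda>t. - (- qN t)) \<in> borel_measurable borel" by (rule borel_measurable_uminus)
  then show ?thesis by simp
qed

definition H :: "nat \<Rightarrow> real \<Rightarrow> ennreal" where
  "H n t = ennreal (2 * t * (qN t ^ n + 1 - (1 - qN t) ^ n)) * indicator {0<..} t"

lemma H_meas[measurable]: "H n \<in> borel_measurable borel"
  unfolding H_def by measurable

lemma H_eq: assumes "1 \<le> n" shows "(\<integral>\<^sup>+x. ennreal ((Min (x ` {..<n}))\<^sup>2) \<partial>PN n) = (\<integral>\<^sup>+t. H n t \<partial>lborel)"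
  unfolding nnE H_def
proof (intro nn_integral_cong)
  fix t :: real
  show "ennreal (2 * t * G n t) * indicator {0<..} t =
        ennreal (2 * t * (qN t ^ n + 1 - (1 - qN t) ^ n)) * indicator {0<..} t"
    by (cases "0 < t") (simp_all add: G_formula[OF assms])
qed

lemma E_H: assumes "1 \<le> n" shows "E_min_sq n = enn2real (\<integral>\<^sup>+t. H n t \<partial>lborel)"
  unfolding E_min_sq_def H_eq[OF assms, symmetric] by (rule integral_eq_nn_integral) auto

lemma H_fin: assumes "1 \<le> n" shows "(\<integral>\<^sup>+t. H n t \<partial>lborel) < \<infinity>"
  using fin[OF assms] H_eq[OF assms] by simp

lemma H12: "H 2 t = H 1 t"
proof -
  have "q^2 + 1 - (1 - q)^2 = q^1 + 1 - (1 - q)^1" for q :: real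
    by (simp add: power2_eq_square algebra_simps)
  then show ?thesis unfolding H_def by simp
qed

lemma alg: fixes a :: real assumes "0 < a" "a < 1/2" "1 \<le> m"
  shows "a ^ (m+1) + 1 - (1 - a) ^ (m+1) < a ^ (m+2) + 1 - (1 - a) ^ (m+2)"
proof -
  have "a ^ m < (1 - a) ^ m" using assms by (intro power_strict_mono) auto
  then have "0 < a * (1 - a) * ((1 - a) ^ m - a ^ m)" using assms by (intro mult_pos_pos) auto
  moreover have "a * (1 - a) * ((1 - a) ^ m - a ^ m) =
     (a ^ (m+2) + 1 - (1 - a) ^ (m+2)) - (a ^ (m+1) + 1 - (1 - a) ^ (m+1))"
  proof -
    have e: "a ^ (m+1) = a^m * a" "a ^ (m+2) = a^m * a * a"
      "(1-a) ^ (m+1) = (1-a)^m * (1-a)" "(1-a) ^ (m+2) = (1-a)^m * (1-a) * (1-a)"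
      by (simp_all add: power_add power2_eq_square)
    show ?thesis unfolding e by (simp add: algebra_simps)
  qed
  ultimately show ?thesis by linarith
qed

lemma H_less: assumes "2 \<le> l" "0 < t" shows "H l t < H (l+1) t"
proof -
  define m where "m = l - 1"
  have m: "l = m + 1" "1 \<le> m" using assms unfolding m_def by arith+
  have "qN t ^ l + 1 - (1 - qN t) ^ l < qN t ^ (l+1) + 1 - (1 - qN t) ^ (l+1)"
    using alg[OF qN_pos qN_half[OF assms(2)] m(2)] m(1) by (simp add: add.assoc)
  moreover have "0 \<le> qN t ^ l + 1 - (1 - qN t) ^ l"
  proof -
    have "(1 - qN t) ^ l \<le> 1" using qN_pos[of t] qN_half[OF assms(2)] by (intro power_le_one) auto
    moreover have "0 \<le> qN t ^ l" using qN_pos[of t] by simp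
    ultimately show ?thesis by linarith
  qed
  ultimately show ?thesis using assms
    unfolding H_def by (simp add: ennreal_less_iff)
qed


lemma enn2real_strict: fixes a b :: ennreal assumes "a < b" "b < top" shows "enn2real a < enn2real b"
proof -
  have "a < top" using assms by (rule less_trans)
  then have "ennreal (enn2real a) < ennreal (enn2real b)" using assms by simp
  then show ?thesis by (simp add: ennreal_less_iff)
qed

lemma H_int_less: assumes "2 \<le> l" shows "(\<integral>\<^sup>+t. H l t \<partial>lborel) < (\<integral>\<^sup>+t. H (l+1) t \<partial>lborel)"
proof (rule nn_integral_less)
  show "(\<integral>\<^sup>+t. H l t \<partial>lborel) \<noteq> \<infinity>" using H_fin[of l] assms by simp
  have le: "H l t \<le> H (l+1) t" for t
    using H_less[OF assms, of t] by (cases "0 < t") (auto simp: H_def)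
  then show "AE t in lborel. H l t \<le> H (l+1) t" by simp
  show "\<not> (AE t in lborel. H (l+1) t \<le> H l t)"
  proof
    assume "AE t in lborel. H (l+1) t \<le> H l t"
    then obtain Z where Z: "{t \<in> space lborel. \<not> H (l+1) t \<le> H l t} \<subseteq> Z" "emeasure lborel Z = 0" "Z \<in> sets lborel"
      by (rule AE_E)
    have "{0<..<1::real} \<subseteq> Z"
    proof
      fix t :: real assume "t \<in> {0<..<1}"
      then have "\<not> H (l+1) t \<le> H l t" using H_less[OF assms, of t] by auto
      then show "t \<in> Z" using Z(1) by auto
    qed
    then have "emeasure lborel {0<..<1::real} \<le> emeasure lborel Z"
      using Z(3) by (intro emeasure_mono) auto
    then show False using Z(2) by simp
  qed
qed auto

theorem lemma3:
  shows "E_min_sq 1 = 1 \<and> E_min_sq 2 = 1 \<and>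
         (\<forall>l::nat. l \<ge> 2 \<longrightarrow> E_min_sq (l + 1) > E_min_sq l)"
proof (intro conjI allI impI)
  show "E_min_sq 1 = 1" by (rule E1)
  have "E_min_sq 2 = E_min_sq 1" using E_H[of 2] E_H[of 1] by (simp add: H12)
  then show "E_min_sq 2 = 1" using E1 by simp
  fix l :: nat assume l: "2 \<le> l"
  show "E_min_sq (l + 1) > E_min_sq l"
    using E_H[of l] E_H[of "l+1"] l H_int_less[OF l] H_fin[of "l+1"]
    by (auto intro!: enn2real_strict)
qed

end
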